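(* Let $\mathscr{X}$ be a finite nonempty set of possible samples, and identify a dataset with its vector of multiplicities $\mathcal{D}\in\mathbb{N}^{|\mathscr{X}|}$, so that $\|\mathcal{D}\|_1$ is its number of samples and $\|\mathcal{D}-\mathcal{D}'\|_1$ is the distance between two datasets. Let $\Lambda\in\mathbb{N}^*$ be a minimum support, let $\beta>0$, and let $\mathcal{D}\in\mathbb{N}^{|\mathscr{X}|}$ with $\|\mathcal{D}\|_1\ge \Lambda$. Define $$g:\mathbb{R}^+\to[0,1],\qquad g(x)=1-\Big(\frac{x}{x+1}\Big)^2-\Big(\frac{1}{x+1}\Big)^2,$$ and $$\xi_{\mathcal{D},\beta}:\mathbb{N}\to\mathbb{R}^+,\qquad \xi_{\mathcal{D},\beta}(k)=e^{-k\beta}\, g\big(\max(\Lambda,\|\mathcal{D}\|_1-k)\big).$$ Let $t=\|\mathcal{D}\|_1-\dfrac{1-\beta-\sqrt{(1-\beta)^2-4\beta}}{2\beta}$ when this expression is well defined (i.e. $(1-\beta)^2-4\beta\ge 0$ and the resulting value is $\ge 0$), and $t=0$ otherwise. Then the smooth sensitivity of the Gini impurity at $\mathcal{D}$ (as defined in the context) satisfies $$S^*_{\mathcal{G},\beta}(\mathcal{D})=\max\Big[\xi_{\mathcal{D},\beta}(0),\ \xi_{\mathcal{D},\beta}(\lfloor t\rfloor),\ \xi_{\mathcal{D},\beta}(\lceil t\rceil),\ \xi_{\mathcal{D},\beta}(\|\mathcal{D}\|_1-\Lambda)\Big].$$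
   Context: Setting: binary classification with a rule being evaluated on the dataset $\mathcal{D}$ of samples remaining to be classified. The local sensitivity of the Gini impurity at a dataset $\mathcal{D}'$ is $LS_{\mathcal{G}}(\mathcal{D}')=g(\|\mathcal{D}'\|_1)$ with $g$ as in the claim. Given the minimum support $\Lambda$ (only datasets with at least $\Lambda$ samples are considered), define for $k\in\mathbb{N}$ $$\mathcal{T}_k(\mathcal{D})=\max\{LS_{\mathcal{G}}(\mathcal{D}') : \mathcal{D}'\in\mathbb{N}^{|\mathscr{X}|},\ \|\mathcal{D}'-\mathcal{D}\|_1\le k,\ \|\mathcal{D}'\|_1\ge\Lambda\},$$ and the smooth sensitivity of the Gini impurity as $S^*_{\mathcal{G},\beta}(\mathcal{D})=\max_{k\in\mathbb{N}} e^{-\beta k}\,\mathcal{T}_k(\mathcal{D})$. *)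

theory Defs
  imports Complex_Main
begin

definition l1norm :: "('x::finite \<Rightarrow> nat) \<Rightarrow> nat" where
  "l1norm D = (\<Sum>x\<in>UNIV. D x)"

definition l1dist :: "('x::finite \<Rightarrow> nat) \<Rightarrow> ('x \<Rightarrow> nat) \<Rightarrow> nat" where
  "l1dist D D' = (\<Sum>x\<in>UNIV. nat \<bar>int (D x) - int (D' x)\<bar>)"

definition gfun :: "real \<Rightarrow> real" where
  "gfun x = 1 - (x / (x + 1))^2 - (1 / (x + 1))^2"

definition LS_gini :: "('x::finite \<Rightarrow> nat) \<Rightarrow> real" where
  "LS_gini D' = gfun (real (l1norm D'))"

definition T_k :: "nat \<Rightarrow> nat \<Rightarrow> ('x::finite \<Rightarrow> nat) \<Rightarrow> real" where
  "T_k \<Lambda> k D = Sup {LS_gini D' | D'. l1dist D' D \<le> k \<and> l1norm D' \<ge> \<Lambda>}"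

definition smooth_sens_gini :: "nat \<Rightarrow> real \<Rightarrow> ('x::finite \<Rightarrow> nat) \<Rightarrow> real" where
  "smooth_sens_gini \<Lambda> \<beta> D = (SUP k\<in>(UNIV::nat set). exp (- \<beta> * real k) * T_k \<Lambda> k D)"

definition xi :: "nat \<Rightarrow> real \<Rightarrow> ('x::finite \<Rightarrow> nat) \<Rightarrow> nat \<Rightarrow> real" where
  "xi \<Lambda> \<beta> D k = exp (- real k * \<beta>) * gfun (max (real \<Lambda>) (real (l1norm D) - real k))"

definition t_crit :: "real \<Rightarrow> ('x::finite \<Rightarrow> nat) \<Rightarrow> real" where
  "t_crit \<beta> D =
     (let \<Delta> = (1 - \<beta>)^2 - 4 * \<beta>;
          v = real (l1norm D) - (1 - \<beta> - sqrt \<Delta>) / (2 * \<beta>)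
      in if \<Delta> \<ge> 0 \<and> v \<ge> 0 then v else 0)"

end

theory Submission
  imports Defs
begin

lemma gfun_closed: "x + 1 \<noteq> 0 \<Longrightarrow> gfun x = 2 * x / (x + 1)^2"
proof -
  assume h: "x + 1 \<noteq> 0"
  have "gfun x = ((x+1)^2 - x^2 - 1) / (x+1)^2"
    unfolding gfun_def power_divide using h by (simp add: diff_divide_distrib)
  also have "(x+1)^2 - x^2 - 1 = 2 * x" by (simp add: power2_eq_square algebra_simps)
  finally show ?thesis .
qed

lemma gfun_antitone:
  assumes "1 \<le> a" "a \<le> b" shows "gfun b \<le> gfun a"
proof -
  have "(b - a) * (a * b - 1) \<ge> 0"
  proof (rule mult_nonneg_nonneg)
    show "a * b - 1 \<ge> 0" using assms mult_mono[of 1 a 1 b] by simp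
  qed (use assms in simp)
  hence "2 * b * (a + 1)^2 \<le> 2 * a * (b + 1)^2"
    by (simp add: power2_eq_square algebra_simps)
  hence "2 * b / (b + 1)^2 \<le> 2 * a / (a + 1)^2"
    using assms by (simp add: divide_simps)
  thus ?thesis using assms by (simp add: gfun_closed)
qed

lemma exists_sub:
  fixes D :: "'x::finite \<Rightarrow> nat"
  shows "j \<le> l1norm D \<Longrightarrow> \<exists>D'. (\<forall>x. D' x \<le> D x) \<and> l1norm D' = l1norm D - j"
proof (induction j)
  case 0
  then show ?case by auto
next
  case (Suc j)
  then obtain D' where D': "\<forall>x. D' x \<le> D x" "l1norm D' = l1norm D - j" by auto
  have pos: "l1norm D' > 0" using Suc.prems D' by simp
  obtain x where x: "D' x > 0"
  proof (rule ccontr)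
    assume "\<not> thesis"
    hence "\<forall>x. D' x = 0" using that by auto
    hence "l1norm D' = 0" unfolding l1norm_def by simp
    with pos show False by simp
  qed
  define D'' where "D'' = D'(x := D' x - 1)"
  have "l1norm D' = D' x + (\<Sum>y\<in>UNIV - {x}. D' y)"
    unfolding l1norm_def by (simp add: sum.remove[of UNIV x])
  moreover have "l1norm D'' = D'' x + (\<Sum>y\<in>UNIV - {x}. D'' y)"
    unfolding l1norm_def by (simp add: sum.remove[of UNIV x])
  moreover have "(\<Sum>y\<in>UNIV - {x}. D'' y) = (\<Sum>y\<in>UNIV - {x}. D' y)"
    unfolding D''_def by (rule sum.cong) auto
  ultimately have "l1norm D'' = l1norm D' - 1" using x unfolding D''_def by simp
  moreover have "\<forall>y. D'' y \<le> D y" using D' unfolding D''_def by (auto intro: le_trans[OF diff_le_self])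
  ultimately show ?case using D' by (intro exI[of _ D'']) simp
qed

lemma l1dist_sub:
  fixes D :: "'x::finite \<Rightarrow> nat"
  assumes "\<forall>x. D' x \<le> D x"
  shows "l1dist D' D = l1norm D - l1norm D'"
proof -
  have "l1dist D' D = (\<Sum>x\<in>UNIV. D x - D' x)"
    unfolding l1dist_def by (rule sum.cong) (use assms in auto)
  also have "\<dots> = l1norm D - l1norm D'"
    unfolding l1norm_def by (rule sum_subtractf_nat) (use assms in auto)
  finally show ?thesis .
qed

lemma l1_lower:
  fixes D :: "'x::finite \<Rightarrow> nat"
  shows "l1norm D \<le> l1norm D' + l1dist D' D"
proof -
  have "l1norm D \<le> (\<Sum>x\<in>UNIV. D' x + nat \<bar>int (D' x) - int (D x)\<bar>)"
    unfolding l1norm_def by (rule sum_mono) arith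
  thus ?thesis unfolding l1norm_def l1dist_def by (simp add: sum.distrib)
qed

lemma T_k_eq:
  fixes D :: "'x::finite \<Rightarrow> nat"
  assumes "\<Lambda> \<ge> 1" "l1norm D \<ge> \<Lambda>"
  shows "T_k \<Lambda> k D = gfun (real (max \<Lambda> (l1norm D - k)))"
proof -
  define m where "m = max \<Lambda> (l1norm D - k)"
  have mle: "m \<le> l1norm D" using assms unfolding m_def by simp
  obtain D' where D': "\<forall>x. D' x \<le> D x" "l1norm D' = l1norm D - (l1norm D - m)"
    using exists_sub[of "l1norm D - m" D] by auto
  have n': "l1norm D' = m" using D' mle by simp
  have "l1dist D' D = l1norm D - m" using l1dist_sub[OF D'(1)] n' by simp
  hence mem: "gfun (real m) \<in> {LS_gini D' | D'. l1dist D' D \<le> k \<and> l1norm D' \<ge> \<Lambda>}"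
    unfolding LS_gini_def m_def using n' unfolding m_def
    by (intro CollectI exI[of _ D']) auto
  have ub: "z \<le> gfun (real m)" if "z \<in> {LS_gini D' | D'. l1dist D' D \<le> k \<and> l1norm D' \<ge> \<Lambda>}" for z
  proof -
    from that obtain E where E: "z = LS_gini E" "l1dist E D \<le> k" "l1norm E \<ge> \<Lambda>" by auto
    have "l1norm D \<le> l1norm E + k" using l1_lower[of D E] E by simp
    hence "m \<le> l1norm E" using E unfolding m_def by simp
    moreover have "1 \<le> m" using assms unfolding m_def by simp
    ultimately show ?thesis unfolding E LS_gini_def
      by (intro gfun_antitone) auto
  qed
  show ?thesis unfolding T_k_def m_def[symmetric]
    by (rule cSup_eq_maximum[OF mem ub])
qed

lemma g_deriv:
  fixes y :: real assumes "y + 1 \<noteq> 0"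
  shows "((\<lambda>y. 2*y/(y+1)^2) has_real_derivative (2*(1-y)/(y+1)^3)) (at y)"
proof -
  have a: "1 + y \<noteq> 0" using assms by argo
  show ?thesis
  apply (rule derivative_eq_intros refl | simp add: assms)+
  using assms a apply (simp add: field_simps)
  apply algebra
  done
qed

lemma alg: fixes y E \<beta> :: real assumes "y + 1 \<noteq> 0"
  shows "E * (-\<beta>) * (2*y/(y+1)^2) + 2*(1-y)/(y+1)^3 * (-1) * E = -2*E*(\<beta>*y^2+(\<beta>-1)*y+1)/(y+1)^3"
proof -
  have a: "1 + y \<noteq> 0" using assms by argo
  show ?thesis using assms a apply (simp add: field_simps) by algebra
qed

definition hh :: "real \<Rightarrow> real \<Rightarrow> real \<Rightarrow> real" where
  "hh \<beta> n k = exp(-\<beta>*k) * (2*(n-k)/((n-k)+1)^2)"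

definition qq :: "real \<Rightarrow> real \<Rightarrow> real" where
  "qq \<beta> y = \<beta>*y^2 + (\<beta>-1)*y + 1"

lemma hh_deriv:
  assumes "n - k + 1 \<noteq> 0"
  shows "((hh \<beta> n) has_real_derivative (-2*exp(-\<beta>*k)*qq \<beta> (n-k)/(n-k+1)^3)) (at k)"
proof -
  have d1: "((\<lambda>k. exp(-\<beta>*k)) has_real_derivative exp(-\<beta>*k)*(-\<beta>)) (at k)"
    by (rule derivative_eq_intros refl | simp)+
  have d0: "((\<lambda>k. n - k) has_real_derivative -1) (at k)"
    by (rule derivative_eq_intros refl | simp)+
  have d2: "((\<lambda>k. 2*(n-k)/((n-k)+1)^2) has_real_derivative 2*(1-(n-k))/((n-k)+1)^3 * (-1)) (at k)"
    using DERIV_chain2[OF g_deriv[of "n-k"] d0] assms by simp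
  have "(hh \<beta> n has_real_derivative exp(-\<beta>*k)*(-\<beta>) * (2*(n-k)/((n-k)+1)^2)
          + 2*(1-(n-k))/((n-k)+1)^3 * (-1) * exp(-\<beta>*k)) (at k)"
    unfolding hh_def[abs_def] by (rule DERIV_mult[OF d1 d2])
  then show ?thesis unfolding qq_def using alg[of "n-k" "exp(-\<beta>*k)" \<beta>] assms by simp
qed

lemma hh_dec:
  assumes "a \<le> b" "\<And>x. a \<le> x \<Longrightarrow> x \<le> b \<Longrightarrow> n - x \<ge> 1 \<and> qq \<beta> (n-x) \<ge> 0"
  shows "hh \<beta> n b \<le> hh \<beta> n a"
proof (rule DERIV_nonpos_imp_nonincreasing[OF assms(1)])
  fix x assume x: "a \<le> x" "x \<le> b"
  have h: "n - x \<ge> 1" "qq \<beta> (n-x) \<ge> 0" using assms(2)[OF x] by auto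
  have "0 \<le> 2*exp(-\<beta>*x)*qq \<beta> (n-x)/(n-x+1)^3"
    using h by (intro divide_nonneg_pos mult_nonneg_nonneg) auto
  hence "-2*exp(-\<beta>*x)*qq \<beta> (n-x)/(n-x+1)^3 \<le> 0" by simp
  moreover have "n - x + 1 \<noteq> 0" using h by simp
  ultimately show "\<exists>y. DERIV (hh \<beta> n) x :> y \<and> y \<le> 0" using hh_deriv by blast
qed

lemma hh_inc:
  assumes "a \<le> b" "\<And>x. a \<le> x \<Longrightarrow> x \<le> b \<Longrightarrow> n - x \<ge> 1 \<and> qq \<beta> (n-x) \<le> 0"
  shows "hh \<beta> n a \<le> hh \<beta> n b"
proof (rule DERIV_nonneg_imp_nondecreasing[OF assms(1)])
  fix x assume x: "a \<le> x" "x \<le> b"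
  have h: "n - x \<ge> 1" "-qq \<beta> (n-x) \<ge> 0" using assms(2)[OF x] by auto
  have "0 \<le> 2*exp(-\<beta>*x)*(-qq \<beta> (n-x))/(n-x+1)^3"
    using h by (intro divide_nonneg_pos mult_nonneg_nonneg) auto
  hence "-2*exp(-\<beta>*x)*qq \<beta> (n-x)/(n-x+1)^3 \<ge> 0" by simp
  moreover have "n - x + 1 \<noteq> 0" using h by simp
  ultimately show "\<exists>y. DERIV (hh \<beta> n) x :> y \<and> y \<ge> 0" using hh_deriv by blast
qed

lemma qq_factor:
  assumes "\<beta> > 0" "(1 - \<beta>)^2 - 4*\<beta> \<ge> 0"
  shows "qq \<beta> y = \<beta> * (y - (1 - \<beta> - sqrt ((1 - \<beta>)^2 - 4*\<beta>))/(2*\<beta>))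
                        * (y - (1 - \<beta> + sqrt ((1 - \<beta>)^2 - 4*\<beta>))/(2*\<beta>))"
proof -
  define r where "r = sqrt ((1 - \<beta>)^2 - 4*\<beta>)"
  have r2: "r^2 = (1 - \<beta>)^2 - 4*\<beta>" unfolding r_def using assms by simp
  have "\<beta> * (y - (1 - \<beta> - r)/(2*\<beta>)) * (y - (1 - \<beta> + r)/(2*\<beta>))
      = (4*\<beta>^2*y^2 - 4*\<beta>*(1-\<beta>)*y + ((1-\<beta>)^2 - r^2)) / (4*\<beta>)"
    using assms by (simp add: field_simps power2_eq_square)
  also have "\<dots> = qq \<beta> y" unfolding qq_def r2 using assms
    by (simp add: field_simps power2_eq_square)
  finally show ?thesis unfolding r_def by simp
qed

lemma qq_pos:
  assumes "\<beta> > 0" "(1 - \<beta>)^2 - 4*\<beta> < 0"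
  shows "qq \<beta> y > 0"
proof -
  have "4*\<beta>*qq \<beta> y = (2*\<beta>*y + \<beta> - 1)^2 - ((1 - \<beta>)^2 - 4*\<beta>)"
    unfolding qq_def by algebra
  also have "\<dots> > 0" using assms by (smt (verit) zero_le_power2)
  finally show ?thesis using assms by (simp add: zero_less_mult_iff)
qed

theorem theorem1:
  fixes D :: "'x::finite \<Rightarrow> nat" and \<Lambda> :: nat and \<beta> :: real
  assumes "\<Lambda> \<ge> 1" and "\<beta> > 0" and "l1norm D \<ge> \<Lambda>"
  shows "smooth_sens_gini \<Lambda> \<beta> D =
           Max {xi \<Lambda> \<beta> D 0,
                xi \<Lambda> \<beta> D (nat \<lfloor>t_crit \<beta> D\<rfloor>),
                xi \<Lambda> \<beta> D (nat \<lceil>t_crit \<beta> D\<rceil>),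
                xi \<Lambda> \<beta> D (l1norm D - \<Lambda>)}"
proof -
  note L1 = assms(1) and bpos = assms(2) and LN = assms(3)
  define N where "N = l1norm D"
  define n where "n = real N"
  define K where "K = N - \<Lambda>"
  have rK: "real K = n - real \<Lambda>" unfolding K_def n_def using LN N_def by (simp add: of_nat_diff)
  define M where "M = Max {xi \<Lambda> \<beta> D 0,
                xi \<Lambda> \<beta> D (nat \<lfloor>t_crit \<beta> D\<rfloor>),
                xi \<Lambda> \<beta> D (nat \<lceil>t_crit \<beta> D\<rceil>),
                xi \<Lambda> \<beta> D (l1norm D - \<Lambda>)}"
  have M0: "xi \<Lambda> \<beta> D 0 \<le> M" and Mf: "xi \<Lambda> \<beta> D (nat \<lfloor>t_crit \<beta> D\<rfloor>) \<le> M"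
    and Mc: "xi \<Lambda> \<beta> D (nat \<lceil>t_crit \<beta> D\<rceil>) \<le> M" and MK: "xi \<Lambda> \<beta> D K \<le> M"
    unfolding M_def K_def N_def by (simp_all add: le_max_iff_disj)
  have Min: "M \<in> range (xi \<Lambda> \<beta> D)"
  proof -
    have "M \<in> {xi \<Lambda> \<beta> D 0,
                xi \<Lambda> \<beta> D (nat \<lfloor>t_crit \<beta> D\<rfloor>),
                xi \<Lambda> \<beta> D (nat \<lceil>t_crit \<beta> D\<rceil>),
                xi \<Lambda> \<beta> D (l1norm D - \<Lambda>)}" unfolding M_def by (rule Max_in) auto
    thus ?thesis by auto
  qed
  have xi_eq: "xi \<Lambda> \<beta> D k = hh \<beta> n (real k)" if "k \<le> K" for k
  proof -
    have "real k \<le> n - real \<Lambda>" using that rK by simp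
    hence mx: "max (real \<Lambda>) (n - real k) = n - real k" by simp
    have "n - real k + 1 \<noteq> 0" using \<open>real k \<le> n - real \<Lambda>\<close> L1 by simp
    thus ?thesis unfolding xi_def hh_def n_def[symmetric] N_def[symmetric] mx
      by (simp add: gfun_closed mult.commute)
  qed
  have xi_big: "xi \<Lambda> \<beta> D k \<le> xi \<Lambda> \<beta> D K" if "K \<le> k" for k
  proof -
    have "n - real k \<le> real \<Lambda>" using that rK by simp
    hence m1: "max (real \<Lambda>) (n - real k) = real \<Lambda>" by simp
    have m2: "max (real \<Lambda>) (n - real K) = real \<Lambda>" using rK by simp
    have "gfun (real \<Lambda>) \<ge> 0" using L1 by (simp add: gfun_closed)
    moreover have "exp (- real k * \<beta>) \<le> exp (- real K * \<beta>)" using that bpos by simp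
    ultimately show ?thesis unfolding xi_def n_def[symmetric] N_def[symmetric] m1 m2
      by (simp add: mult_right_mono)
  qed
  define \<Delta> where "\<Delta> = (1 - \<beta>)^2 - 4 * \<beta>"
  define y1 where "y1 = (1 - \<beta> - sqrt \<Delta>) / (2 * \<beta>)"
  define y2 where "y2 = (1 - \<beta> + sqrt \<Delta>) / (2 * \<beta>)"
  define v where "v = n - y1"
  have tc: "t_crit \<beta> D = (if \<Delta> \<ge> 0 \<and> v \<ge> 0 then v else 0)"
    unfolding t_crit_def Let_def \<Delta>_def v_def y1_def n_def N_def by simp
  have qf: "qq \<beta> y = \<beta> * (y - y1) * (y - y2)" if "\<Delta> \<ge> 0" for y
    using qq_factor[OF bpos, of y] that unfolding \<Delta>_def y1_def y2_def by simp
  have y12: "y1 \<le> y2" if "\<Delta> \<ge> 0" unfolding y1_def y2_def using bpos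
    using that by (intro divide_right_mono) auto
  have qnn: "qq \<beta> y \<ge> 0" if "\<Delta> \<ge> 0" "y \<le> y1 \<or> y \<ge> y2" for y
  proof -
    have "(y - y1) * (y - y2) \<ge> 0"
      using that y12[OF that(1)] by (auto intro: mult_nonpos_nonpos mult_nonneg_nonneg)
    thus ?thesis using qf[OF that(1)] bpos by (simp add: mult.assoc)
  qed
  have qnp: "qq \<beta> y \<le> 0" if "\<Delta> \<ge> 0" "y1 \<le> y" "y \<le> y2" for y
  proof -
    have "(y - y1) * (y - y2) \<le> 0"
      using that by (auto intro: mult_nonneg_nonpos)
    thus ?thesis using qf[OF that(1)] bpos by (simp add: mult.assoc mult_nonneg_nonpos)
  qed
  have bound: "xi \<Lambda> \<beta> D k \<le> M" for k
  proof (cases "K \<le> k")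
    case True
    then show ?thesis using xi_big MK by (meson order_trans)
  next
    case False
    hence kK: "k \<le> K" by simp
    have nx: "n - x \<ge> 1" if "x \<le> real k" for x
      using that kK rK L1 by (smt (verit) of_nat_le_iff of_nat_1)
    show ?thesis
    proof (cases "\<Delta> \<ge> 0 \<and> v \<ge> 0")
      case False
      have "hh \<beta> n (real k) \<le> hh \<beta> n 0"
      proof (rule hh_dec)
        fix x assume x: "0 \<le> x" "x \<le> real k"
        have "qq \<beta> (n - x) \<ge> 0"
        proof (cases "\<Delta> \<ge> 0")
          case True
          with False have "v < 0" by simp
          hence "n - x \<le> y1" using x unfolding v_def by simp
          then show ?thesis using qnn True by simp
        next
          case False
          then show ?thesis using qq_pos[OF bpos] unfolding \<Delta>_def
            by (simp add: less_imp_le)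
        qed
        then show "n - x \<ge> 1 \<and> qq \<beta> (n - x) \<ge> 0" using nx x by simp
      qed simp
      then show ?thesis using xi_eq[OF kK] xi_eq[of 0] M0 by simp
    next
      case True
      hence tv: "t_crit \<beta> D = v" using tc by simp
      show ?thesis
      proof (cases "real k \<ge> v")
        case True
        define c where "c = nat \<lceil>v\<rceil>"
        have cv: "real c \<ge> v" unfolding c_def by linarith
        have "\<lceil>v\<rceil> \<le> int k" using True by (simp add: ceiling_le)
        hence ck: "c \<le> k" using True unfolding c_def by simp
        have "hh \<beta> n (real k) \<le> hh \<beta> n (real c)"
        proof (rule hh_dec)
          fix x assume x: "real c \<le> x" "x \<le> real k"
          have "n - x \<le> y1" using x cv unfolding v_def by simp
          then show "n - x \<ge> 1 \<and> qq \<beta> (n - x) \<ge> 0" using nx x qnn \<open>\<Delta> \<ge> 0 \<and> v \<ge> 0\<close> by simp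
        qed (use ck in simp)
        then show ?thesis using xi_eq[OF kK] xi_eq[of c] ck kK Mc tv c_def by simp
      next
        case False
        hence kv: "real k < v" by simp
        show ?thesis
        proof (cases "real k \<le> n - y2")
          case True
          have "hh \<beta> n (real k) \<le> hh \<beta> n 0"
          proof (rule hh_dec)
            fix x assume x: "0 \<le> x" "x \<le> real k"
            have "n - x \<ge> y2" using x True by simp
            then show "n - x \<ge> 1 \<and> qq \<beta> (n - x) \<ge> 0" using nx x qnn \<open>\<Delta> \<ge> 0 \<and> v \<ge> 0\<close> by simp
          qed simp
          then show ?thesis using xi_eq[OF kK] xi_eq[of 0] M0 by simp
        next
          case False
          define f where "f = nat \<lfloor>v\<rfloor>"
          have "int k \<le> \<lfloor>v\<rfloor>" using kv by (simp add: le_floor_iff)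
          hence kf: "k \<le> f" unfolding f_def by simp
          have fv: "real f \<le> v" unfolding f_def using \<open>\<Delta> \<ge> 0 \<and> v \<ge> 0\<close> by linarith
          define m where "m = min f K"
          have km: "k \<le> m" using kf kK unfolding m_def by simp
          have mK: "m \<le> K" unfolding m_def by simp
          have "hh \<beta> n (real k) \<le> hh \<beta> n (real m)"
          proof (rule hh_inc)
            fix x assume x: "real k \<le> x" "x \<le> real m"
            have "x \<le> real f" "x \<le> real K" using x unfolding m_def by auto
            hence "y1 \<le> n - x" using fv unfolding v_def by simp
            moreover have "n - x \<le> y2" using x False by simp
            moreover have "n - x \<ge> 1" using \<open>x \<le> real K\<close> rK L1
              by (smt (verit) of_nat_le_iff of_nat_1)
            ultimately show "n - x \<ge> 1 \<and> qq \<beta> (n - x) \<le> 0"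
              using qnp \<open>\<Delta> \<ge> 0 \<and> v \<ge> 0\<close> by simp
          qed (use km in simp)
          moreover have "xi \<Lambda> \<beta> D m \<le> M"
            using Mf MK tv unfolding m_def f_def by (cases "f \<le> K") (auto simp: min_def f_def)
          ultimately show ?thesis using xi_eq[OF kK] xi_eq[OF mK] by simp
        qed
      qed
    qed
  qed
  have ss: "smooth_sens_gini \<Lambda> \<beta> D = Sup (range (xi \<Lambda> \<beta> D))"
  proof -
    have "(\<lambda>k. exp (- \<beta> * real k) * T_k \<Lambda> k D) = xi \<Lambda> \<beta> D"
    proof
      fix k
      have "real (max \<Lambda> (N - k)) = max (real \<Lambda>) (n - real k)"
        unfolding n_def by (cases "k \<le> N") (auto simp: of_nat_diff)
      thus "exp (- \<beta> * real k) * T_k \<Lambda> k D = xi \<Lambda> \<beta> D k"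
        unfolding T_k_eq[OF L1 LN] xi_def N_def[symmetric] n_def[symmetric]
        by (simp add: mult.commute)
    qed
    thus ?thesis unfolding smooth_sens_gini_def by (rule arg_cong[where f="\<lambda>f. Sup (range f)"])
  qed
  show ?thesis unfolding ss M_def[symmetric]
    by (rule cSup_eq_maximum[OF Min]) (use bound in auto)
qed

end
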